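(* Let $C\ge 2$ and let $D$ be an even positive integer. Let $\mu_1,\dots,\mu_C\in\mathbb{R}^D$ be unit vectors with $\mu_j^\top\mu_{j'}=-\frac{1}{C-1}$ for all $j\neq j'$ (a unit-norm simplex ETF). Let $\alpha\in[0,\pi/2]$, let $A\in\mathbb{R}^{D\times D}$ satisfy $A^\top=-A$ and $A^2=-I$, set $R=\cos\alpha\,I+\sin\alpha\,A$ and classifier weights $w_j=R\mu_j$ (so that $\mu_j^\top w_j=\cos\alpha$ and the $w_j$ also form a unit-norm simplex ETF), with zero biases. For a class $c$ and noise level $\sigma>0$, let $h=\mu_c+z$ with $z\sim\mathcal{N}(0,\sigma^2 I_D)$, let $\hat\gamma(h)=\arg\max_{j}\langle w_j,h\rangle$, and for $c'\neq c$ let $$\beta_{c,c'}=\lim_{\sigma\to 0}\bigl(-\sigma^2\log P_\sigma\{\hat\gamma(h)=c'\mid \gamma=c\}\bigr).$$ Then for every class $c$, $$\min_{c'\neq c}\beta_{c,c'}\;\le\;\frac14\cos^2\alpha\,\frac{C}{C-1}\;=\;\cos^2\alpha\;\beta^*,\qquad\text{where }\beta^*=\frac{C}{4(C-1)}.$$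
   Context: Here $\gamma$ denotes the true class label of the observation $h$, and $P_\sigma$ is the probability over the Gaussian noise $z$ at noise level $\sigma$. The quantity $\beta^*=\frac{C}{C-1}\cdot\frac14$ is the optimal (large-deviations) error exponent attained when class means and classifier weights are perfectly aligned unit-norm simplex ETFs with zero bias. *)

theory Defs
  imports "HOL-Probability.Probability"
begin

definition gauss_density :: "real \<Rightarrow> real^'n \<Rightarrow> real^'n \<Rightarrow> real" where
  "gauss_density \<sigma> m x =
     (2 * pi * \<sigma>\<^sup>2) powr (- real CARD('n) / 2) * exp (- (norm (x - m))\<^sup>2 / (2 * \<sigma>\<^sup>2))"

definition gaussian_measure :: "real \<Rightarrow> real^'n \<Rightarrow> (real^'n) measure" where
  "gaussian_measure \<sigma> m = density lborel (\<lambda>x. ennreal (gauss_density \<sigma> m x))"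

text \<open>Event that the arg-max classifier with weights w over classes 0..<C outputs c'
  (ties have probability zero).\<close>
definition pred_event :: "nat \<Rightarrow> (nat \<Rightarrow> real^'n) \<Rightarrow> nat \<Rightarrow> (real^'n) set" where
  "pred_event C w c' = {h. \<forall>j<C. j \<noteq> c' \<longrightarrow> w j \<bullet> h < w c' \<bullet> h}"

definition miscl_prob :: "nat \<Rightarrow> (nat \<Rightarrow> real^'n) \<Rightarrow> (nat \<Rightarrow> real^'n) \<Rightarrow> nat \<Rightarrow> nat \<Rightarrow> real \<Rightarrow> real" where
  "miscl_prob C \<mu> w c c' \<sigma> = measure (gaussian_measure \<sigma> (\<mu> c)) (pred_event C w c')"

end

theory Submission
  imports Defs "HOL-Real_Asymp.Real_Asymp"
begin


lemma gauss_prod: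
  fixes m x :: "real^'n"
  assumes "\<sigma> > 0"
  shows "gauss_density \<sigma> m x = (\<Prod>b\<in>Basis. normal_density (m \<bullet> b) \<sigma> (x \<bullet> b))"
proof -
  have cB: "card (Basis :: (real^'n) set) = CARD('n)" by simp
  have n: "(norm (x - m))\<^sup>2 = (\<Sum>b\<in>Basis. (x \<bullet> b - m \<bullet> b)\<^sup>2)"
    by (subst power2_norm_eq_inner, subst euclidean_inner) (simp add: power2_eq_square inner_diff_left)
  have "(\<Prod>b\<in>(Basis :: (real^'n) set). normal_density (m \<bullet> b) \<sigma> (x \<bullet> b))
      = (\<Prod>b\<in>(Basis :: (real^'n) set). 1 / sqrt (2 * pi * \<sigma>\<^sup>2)) * (\<Prod>b\<in>(Basis :: (real^'n) set). exp (-(x \<bullet> b - m \<bullet> b)\<^sup>2/ (2 * \<sigma>\<^sup>2)))"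
    unfolding normal_density_def prod.distrib by simp
  also have "(\<Prod>b\<in>(Basis :: (real^'n) set). exp (-(x \<bullet> b - m \<bullet> b)\<^sup>2/ (2 * \<sigma>\<^sup>2))) = exp (- (norm (x - m))\<^sup>2 / (2 * \<sigma>\<^sup>2))"
  proof -
    have "exp (- (norm (x - m))\<^sup>2 / (2 * \<sigma>\<^sup>2)) = exp (\<Sum>b\<in>(Basis :: (real^'n) set). -(x \<bullet> b - m \<bullet> b)\<^sup>2/ (2 * \<sigma>\<^sup>2))"
      unfolding n by (simp add: sum_divide_distrib sum_negf)
    then show ?thesis by (simp add: exp_sum)
  qed
  also have "(\<Prod>b\<in>(Basis :: (real^'n) set). 1 / sqrt (2 * pi * \<sigma>\<^sup>2)) = (2 * pi * \<sigma>\<^sup>2) powr (- real CARD('n) / 2)"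
  proof -
    have p: "2 * pi * \<sigma>\<^sup>2 > 0" using assms by simp
    have "(\<Prod>b\<in>(Basis :: (real^'n) set). 1 / sqrt (2 * pi * \<sigma>\<^sup>2)) = (1 / sqrt (2 * pi * \<sigma>\<^sup>2)) ^ CARD('n)"
      by (simp add: cB)
    also have "\<dots> = ((2 * pi * \<sigma>\<^sup>2) powr (- 1/2)) ^ CARD('n)"
      using p by (simp add: sqrt_def powr_minus_divide root_powr_inverse powr_half_sqrt[symmetric] powr_minus)
    also have "\<dots> = (2 * pi * \<sigma>\<^sup>2) powr (- real CARD('n) / 2)"
      using p by (subst powr_realpow[symmetric]) (auto simp: powr_powr)
    finally show ?thesis .
  qed
  finally show ?thesis unfolding gauss_density_def by simp
qed

lemma gauss_meas[measurable]: "gauss_density \<sigma> m \<in> borel_measurable borel"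
  unfolding gauss_density_def[abs_def] by measurable

lemma gauss_total:
  fixes m :: "real^'n"
  assumes "\<sigma> > 0"
  shows "(\<integral>\<^sup>+x. ennreal (gauss_density \<sigma> m x) \<partial>lborel) = 1"
proof -
  have "(\<integral>\<^sup>+x. ennreal (gauss_density \<sigma> m x) \<partial>lborel)
     = (\<integral>\<^sup>+x. (\<Prod>b\<in>Basis. ennreal (normal_density (m \<bullet> b) \<sigma> (x \<bullet> b))) \<partial>lborel)"
    by (simp add: gauss_prod[OF assms] prod_ennreal)
  also have "\<dots> = (\<Prod>b\<in>(Basis :: (real^'n) set). (\<integral>\<^sup>+y. ennreal (normal_density (m \<bullet> b) \<sigma> y) \<partial>lborel))"
    by (rule nn_integral_lborel_prod) auto
  also have "\<dots> = 1"
    using assms by (simp add: nn_integral_eq_integral)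
  finally show ?thesis .
qed

lemma gauss_prob_space:
  fixes m :: "real^'n"
  assumes "\<sigma> > 0"
  shows "prob_space (gaussian_measure \<sigma> m)"
  proof (rule prob_spaceI)
  have "emeasure (gaussian_measure \<sigma> m) UNIV = (\<integral>\<^sup>+x. ennreal (gauss_density \<sigma> m x) * indicator UNIV x \<partial>lborel)"
    unfolding gaussian_measure_def by (subst emeasure_density) auto
  then show "emeasure (gaussian_measure \<sigma> m) (space (gaussian_measure \<sigma> m)) = 1"
    using gauss_total[OF assms, of m] by (simp add: gaussian_measure_def)
qed



lemma gauss_shift:
  fixes m x u :: "real^'n"
  assumes "\<sigma> > 0" "norm u = 1"
  shows "gauss_density \<sigma> m x * exp (l * (u \<bullet> (x - m)))
       = exp (l\<^sup>2 * \<sigma>\<^sup>2 / 2) * gauss_density \<sigma> (m + (l * \<sigma>\<^sup>2) *\<^sub>R u) x"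
proof -
  define y where "y = x - m"
  have uu: "u \<bullet> u = 1" using assms(2) by (simp add: norm_eq_1)
  have n1: "(norm (x - (m + (l * \<sigma>\<^sup>2) *\<^sub>R u)))\<^sup>2 = y \<bullet> y - 2 * (l * \<sigma>\<^sup>2) * (u \<bullet> y) + (l * \<sigma>\<^sup>2)\<^sup>2"
  proof -
    have e1: "x - (m + (l * \<sigma>\<^sup>2) *\<^sub>R u) = y - (l * \<sigma>\<^sup>2) *\<^sub>R u" by (simp add: y_def algebra_simps)
    have gen: "(norm (y - a *\<^sub>R u))\<^sup>2 = y \<bullet> y - 2 * a * (u \<bullet> y) + a\<^sup>2" for a
      unfolding power2_norm_eq_inner
      by (simp add: inner_diff_left inner_diff_right uu inner_commute power2_eq_square algebra_simps)
    show ?thesis unfolding e1 by (rule gen)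
  qed
  have n2: "(norm (x - m))\<^sup>2 = y \<bullet> y" by (simp add: y_def power2_norm_eq_inner)
  have e: "- (norm (x - m))\<^sup>2 / (2 * \<sigma>\<^sup>2) + l * (u \<bullet> (x - m))
      = l\<^sup>2 * \<sigma>\<^sup>2 / 2 + - (norm (x - (m + (l * \<sigma>\<^sup>2) *\<^sub>R u)))\<^sup>2 / (2 * \<sigma>\<^sup>2)"
  proof -
    have yx: "u \<bullet> (x - m) = u \<bullet> y" by (simp add: y_def)
    show ?thesis
      apply (subst n1, subst n2, subst yx)
      using assms(1) by (simp add: field_simps power2_eq_square)
  qed
  define Cs where "Cs = (2 * pi * \<sigma>\<^sup>2) powr (- real CARD('n) / 2)"
  have "gauss_density \<sigma> m x * exp (l * (u \<bullet> (x - m))) = Cs * exp (- (norm (x - m))\<^sup>2 / (2 * \<sigma>\<^sup>2) + l * (u \<bullet> (x - m)))"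
    unfolding gauss_density_def exp_add Cs_def by (simp add: mult.assoc)
  also have "\<dots> = Cs * exp (l\<^sup>2 * \<sigma>\<^sup>2 / 2 + - (norm (x - (m + (l * \<sigma>\<^sup>2) *\<^sub>R u)))\<^sup>2 / (2 * \<sigma>\<^sup>2))"
    by (simp only: e)
  also have "\<dots> = exp (l\<^sup>2 * \<sigma>\<^sup>2 / 2) * gauss_density \<sigma> (m + (l * \<sigma>\<^sup>2) *\<^sub>R u) x"
    unfolding gauss_density_def exp_add Cs_def by (simp only: mult_ac)
  finally show ?thesis .
qed

lemma gauss_halfspace:
  fixes m u :: "real^'n" and E :: "(real^'n) set"
  assumes s: "\<sigma> > 0" "norm u = 1" "s \<ge> 0" "E \<in> sets borel"
    and sub: "E \<subseteq> {x. s \<le> u \<bullet> (x - m)}"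
  shows "measure (gaussian_measure \<sigma> m) E \<le> exp (- s\<^sup>2 / (2 * \<sigma>\<^sup>2))"
proof -
  define l where "l = s / \<sigma>\<^sup>2"
  have l0: "l \<ge> 0" using s by (simp add: l_def)
  define K where "K = exp (- l * s) * exp (l\<^sup>2 * \<sigma>\<^sup>2 / 2)"
  have K: "K = exp (- s\<^sup>2 / (2 * \<sigma>\<^sup>2))"
    unfolding K_def exp_add[symmetric] l_def using s(1)
    by (simp add: field_simps power2_eq_square)
  have "emeasure (gaussian_measure \<sigma> m) E = (\<integral>\<^sup>+x. ennreal (gauss_density \<sigma> m x) * indicator E x \<partial>lborel)"
    unfolding gaussian_measure_def using s(4) by (subst emeasure_density) auto
  also have "\<dots> \<le> (\<integral>\<^sup>+x. ennreal K * ennreal (gauss_density \<sigma> (m + (l * \<sigma>\<^sup>2) *\<^sub>R u) x) \<partial>lborel)"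
  proof (rule nn_integral_mono)
    fix x
    have gd: "gauss_density \<sigma> m x \<ge> 0" unfolding gauss_density_def by simp
    have "gauss_density \<sigma> m x * indicator E x \<le> gauss_density \<sigma> m x * exp (l * (u \<bullet> (x - m)) - l * s)"
    proof (cases "x \<in> E")
      case True
      then have "l * s \<le> l * (u \<bullet> (x - m))" using sub l0 by (auto intro: mult_left_mono)
      then have "1 \<le> exp (l * (u \<bullet> (x - m)) - l * s)" by simp
      from mult_left_mono[OF this gd] show ?thesis using True by simp
    next
      case False then show ?thesis using gd by simp
    qed
    also have "\<dots> = K * gauss_density \<sigma> (m + (l * \<sigma>\<^sup>2) *\<^sub>R u) x"
      unfolding K_def exp_diff using gauss_shift[OF s(1,2), of m x l]
      by (simp add: field_simps exp_minus)
    finally have "ennreal (gauss_density \<sigma> m x * indicator E x) \<le> ennreal (K * gauss_density \<sigma> (m + (l * \<sigma>\<^sup>2) *\<^sub>R u) x)"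
      by (rule ennreal_leI)
    moreover have "K \<ge> 0" unfolding K_def by simp
    ultimately show "ennreal (gauss_density \<sigma> m x) * indicator E x \<le> ennreal K * ennreal (gauss_density \<sigma> (m + (l * \<sigma>\<^sup>2) *\<^sub>R u) x)"
      using gd by (simp add: ennreal_mult' ennreal_indicator)
  qed
  also have "\<dots> = ennreal K"
    by (simp add: nn_integral_cmult gauss_total[OF s(1)])
  finally have "emeasure (gaussian_measure \<sigma> m) E \<le> ennreal K" .
  then show ?thesis
    unfolding measure_def K by (simp add: enn2real_leI)
qed



lemma gauss_ball:
  fixes m q :: "real^'n"
  assumes s: "\<sigma> > 0" "r > 0"
  shows "measure (gaussian_measure \<sigma> m) (ball q r) \<ge>
     unit_ball_vol (real CARD('n)) * r ^ CARD('n) * (2 * pi * \<sigma>\<^sup>2) powr (- real CARD('n) / 2)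
       * exp (- (dist q m + r)\<^sup>2 / (2 * \<sigma>\<^sup>2))"
proof -
  define c where "c = (2 * pi * \<sigma>\<^sup>2) powr (- real CARD('n) / 2) * exp (- (dist q m + r)\<^sup>2 / (2 * \<sigma>\<^sup>2))"
  have c0: "c \<ge> 0" unfolding c_def by simp
  interpret P: prob_space "gaussian_measure \<sigma> m" by (rule gauss_prob_space[OF s(1)])
  have "ennreal (c * (unit_ball_vol (real CARD('n)) * r ^ CARD('n))) = ennreal c * emeasure lborel (ball q r)"
    using s c0 by (simp add: emeasure_ball ennreal_mult)
  also have "\<dots> = (\<integral>\<^sup>+x. ennreal c * indicator (ball q r) x \<partial>lborel)"
    by (simp add: nn_integral_cmult_indicator)
  also have "\<dots> \<le> (\<integral>\<^sup>+x. ennreal (gauss_density \<sigma> m x) * indicator (ball q r) x \<partial>lborel)"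
  proof (rule nn_integral_mono)
    fix x
    show "ennreal c * indicator (ball q r) x \<le> ennreal (gauss_density \<sigma> m x) * indicator (ball q r) x"
    proof (cases "x \<in> ball q r")
      case True
      have "norm (x - m) \<le> dist q m + r"
        using True norm_triangle_ineq[of "x - q" "q - m"] by (simp add: dist_norm norm_minus_commute)
      then have "(norm (x - m))\<^sup>2 \<le> (dist q m + r)\<^sup>2" by (simp add: power_mono)
      then have "(norm (x - m))\<^sup>2 / (2 * \<sigma>\<^sup>2) \<le> (dist q m + r)\<^sup>2 / (2 * \<sigma>\<^sup>2)"
        using s by (simp add: divide_right_mono)
      then have "c \<le> gauss_density \<sigma> m x"
        unfolding c_def gauss_density_def by (intro mult_left_mono) auto
      then show ?thesis using True by (simp add: ennreal_leI)
    qed simp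
  qed
  also have "\<dots> = emeasure (gaussian_measure \<sigma> m) (ball q r)"
    unfolding gaussian_measure_def by (subst emeasure_density) auto
  also have "\<dots> = ennreal (measure (gaussian_measure \<sigma> m) (ball q r))"
    by (simp add: P.emeasure_eq_measure)
  finally have "c * (unit_ball_vol (real CARD('n)) * r ^ CARD('n)) \<le> measure (gaussian_measure \<sigma> m) (ball q r)"
    by (simp add: ennreal_le_iff)
  then show ?thesis unfolding c_def by (simp add: mult_ac)
qed



lemma sq_ln_lim: "((\<lambda>\<sigma>::real. \<sigma>\<^sup>2 * ln (2 * pi * \<sigma>\<^sup>2)) \<longlongrightarrow> 0) (at_right 0)"
  by real_asymp

lemma gauss_ldp:
  fixes m :: "real^'n" and E :: "(real^'n) set"
  assumes E: "open E" "convex E" "E \<noteq> {}"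
  shows "((\<lambda>\<sigma>. - \<sigma>\<^sup>2 * ln (measure (gaussian_measure \<sigma> m) E)) \<longlongrightarrow> (infdist m E)\<^sup>2 / 2) (at_right 0)"
proof -
  define d where "d = infdist m E"
  define D where "D = CARD('n)"
  define f where "f = (\<lambda>\<sigma>. - \<sigma>\<^sup>2 * ln (measure (gaussian_measure \<sigma> m) E))"
  have d0: "d \<ge> 0" unfolding d_def by (rule infdist_nonneg)
  have Eb: "E \<in> sets borel" using E(1) by simp
  have low: "measure (gaussian_measure \<sigma> m) E \<ge>
     unit_ball_vol (real D) * r ^ D * (2 * pi * \<sigma>\<^sup>2) powr (- real D / 2)
       * exp (- (dist q m + r)\<^sup>2 / (2 * \<sigma>\<^sup>2))"
    if "\<sigma> > 0" "r > 0" "ball q r \<subseteq> E" for \<sigma> r q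
  proof -
    interpret P: prob_space "gaussian_measure \<sigma> m" by (rule gauss_prob_space[OF that(1)])
    have "measure (gaussian_measure \<sigma> m) (ball q r) \<le> measure (gaussian_measure \<sigma> m) E"
      using that(3) Eb by (intro P.finite_measure_mono) (auto simp: gaussian_measure_def)
    then show ?thesis using gauss_ball[OF that(1,2), where m=m and q=q] unfolding D_def by linarith
  qed
  have Ppos: "measure (gaussian_measure \<sigma> m) E > 0" if "\<sigma> > 0" for \<sigma>
  proof -
    obtain q where q: "q \<in> E" using E(3) by blast
    obtain r where r: "r > 0" "ball q r \<subseteq> E" using E(1) q by (meson openE)
    have "0 < unit_ball_vol (real D) * r ^ D * (2 * pi * \<sigma>\<^sup>2) powr (- real D / 2)
       * exp (- (dist q m + r)\<^sup>2 / (2 * \<sigma>\<^sup>2))"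
      using r that by simp
    with low[OF that r(1,2)] show ?thesis by linarith
  qed
  have lower: "f \<sigma> \<ge> d\<^sup>2 / 2" if "\<sigma> > 0" for \<sigma>
  proof (cases "d = 0")
    case True
    interpret P: prob_space "gaussian_measure \<sigma> m" by (rule gauss_prob_space[OF that(1)])
    have "ln (measure (gaussian_measure \<sigma> m) E) \<le> 0"
      using Ppos[OF that] P.prob_le_1 by simp
    then show ?thesis unfolding f_def True by (simp add: mult_nonneg_nonpos)
  next
    case False
    then have dp: "d > 0" using d0 by simp
    have disj: "ball m d \<inter> E = {}"
    proof (rule ccontr)
      assume "ball m d \<inter> E \<noteq> {}"
      then obtain x where "x \<in> E" "dist m x < d" by auto
      then show False using infdist_le[of x E m] unfolding d_def by simp
    qed
    obtain a b where ab: "a \<noteq> 0" "\<forall>x\<in>ball m d. a \<bullet> x \<le> b" "\<forall>x\<in>E. b \<le> a \<bullet> x"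
      using separating_hyperplane_sets[of "ball m d" E] disj E dp by auto
    have na: "norm a > 0" using ab(1) by simp
    define u where "u = a /\<^sub>R norm a"
    have nu: "norm u = 1" unfolding u_def using na by simp
    have aat: "a \<bullet> (m + t *\<^sub>R u) = a \<bullet> m + t * norm a" for t
      unfolding u_def using na by (simp add: inner_add_right power2_norm_eq_inner[symmetric] power2_eq_square)
    have key: "a \<bullet> m + d * norm a \<le> b"
    proof (rule ccontr)
      assume "\<not> ?thesis"
      then have lt: "b < a \<bullet> m + d * norm a" by simp
      have bm: "a \<bullet> m \<le> b" using ab(2) dp by simp
      have aux: "\<And>X::real. X < d \<Longrightarrow> X < (X + d) / 2" by (simp add: field_simps)
      define t where "t = ((b - a \<bullet> m) / norm a + d) / 2"
      have t1: "(b - a \<bullet> m) / norm a < d" using lt na by (simp add: field_simps)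
      have t2: "0 \<le> (b - a \<bullet> m) / norm a" using bm na by simp
      have "t < d" "0 \<le> t" using t1 t2 unfolding t_def by auto
      then have "m + t *\<^sub>R u \<in> ball m d" using nu by (simp add: dist_norm)
      then have "a \<bullet> m + t * norm a \<le> b" using ab(2) aat by metis
      moreover have "(b - a \<bullet> m) / norm a < t" unfolding t_def by (rule aux[OF t1])
      then have "b - a \<bullet> m < t * norm a" using na by (simp add: field_simps)
      ultimately show False by simp
    qed
    have sub: "E \<subseteq> {x. d \<le> u \<bullet> (x - m)}"
    proof
      fix x assume "x \<in> E"
      then have "a \<bullet> m + d * norm a \<le> a \<bullet> x" using key ab(3) by force
      then have "d * norm a \<le> a \<bullet> (x - m)" by (simp add: inner_diff_right)
      then have "d \<le> a \<bullet> (x - m) / norm a" using na by (simp add: field_simps)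
      then show "x \<in> {x. d \<le> u \<bullet> (x - m)}" unfolding u_def by (simp add: divide_inverse mult.commute)
    qed
    have "measure (gaussian_measure \<sigma> m) E \<le> exp (- d\<^sup>2 / (2 * \<sigma>\<^sup>2))"
      by (rule gauss_halfspace[OF that nu d0 Eb sub])
    then have "ln (measure (gaussian_measure \<sigma> m) E) \<le> ln (exp (- d\<^sup>2 / (2 * \<sigma>\<^sup>2)))"
      using Ppos[OF that] by (subst ln_le_cancel_iff) auto
    then have "ln (measure (gaussian_measure \<sigma> m) E) \<le> - d\<^sup>2 / (2 * \<sigma>\<^sup>2)" by simp
    then have "\<sigma>\<^sup>2 * ln (measure (gaussian_measure \<sigma> m) E) \<le> \<sigma>\<^sup>2 * (- d\<^sup>2 / (2 * \<sigma>\<^sup>2))"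
      by (rule mult_left_mono) simp
    then show ?thesis unfolding f_def using that by simp
  qed
  have upper: "\<forall>\<^sub>F \<sigma> in at_right 0. f \<sigma> < d\<^sup>2 / 2 + e" if e: "e > 0" for e
  proof -
    define \<delta> where "\<delta> = min 1 (e / (8 * (d + 1)))"
    have \<delta>0: "\<delta> > 0" unfolding \<delta>_def using e d0 by simp
    have \<delta>1: "\<delta> \<le> 1" "\<delta> \<le> e / (8 * (d + 1))" unfolding \<delta>_def by auto
    have "4 * d * \<delta> + 4 * \<delta> * \<delta> \<le> 4 * \<delta> * (d + 1)"
      using \<delta>1 \<delta>0 d0 by (simp add: algebra_simps mult_left_mono)
    also have "\<dots> \<le> 4 * (e / (8 * (d + 1))) * (d + 1)"
      using \<delta>1 d0 by (intro mult_right_mono mult_left_mono) auto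
    also have "\<dots> = e / 2" using d0 by (simp add: field_simps)
    finally have dd: "(d + 2 * \<delta>)\<^sup>2 / 2 \<le> d\<^sup>2 / 2 + e / 4" by (simp add: power2_eq_square algebra_simps)
    have bdd: "bdd_below ((\<lambda>a. dist m a) ` E)" by (rule bdd_belowI[of _ 0]) auto
    have "(INF a\<in>E. dist m a) < d + \<delta>" using infdist_notempty[OF E(3)] \<delta>0 unfolding d_def by simp
    then obtain q where q: "q \<in> E" "dist m q < d + \<delta>" using cINF_less_iff[OF E(3) bdd] by blast
    obtain r0 where r0: "r0 > 0" "ball q r0 \<subseteq> E" using E(1) q by (meson openE)
    define r where "r = min r0 \<delta>"
    have r: "r > 0" "ball q r \<subseteq> E" "r \<le> \<delta>" using r0 \<delta>0 unfolding r_def by auto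
    define V where "V = unit_ball_vol (real D) * r ^ D"
    have V: "V > 0" unfolding V_def using r by simp
    define g where "g = (\<lambda>\<sigma>::real. - \<sigma>\<^sup>2 * ln V + (real D / 2) * (\<sigma>\<^sup>2 * ln (2 * pi * \<sigma>\<^sup>2)))"
    have "(g \<longlongrightarrow> - 0\<^sup>2 * ln V + (real D / 2) * 0) (at_right 0)"
      unfolding g_def by (intro tendsto_intros sq_ln_lim)
    then have "(g \<longlongrightarrow> 0) (at_right 0)" by simp
    then have ev1: "\<forall>\<^sub>F \<sigma> in at_right 0. g \<sigma> < e / 4"
    proof -
      have "e / 4 > 0" using e by simp
      with \<open>(g \<longlongrightarrow> 0) (at_right 0)\<close> show ?thesis by (rule order_tendstoD(2))
    qed
    have ev2: "\<forall>\<^sub>F \<sigma> in at_right 0. (0::real) < \<sigma>" by (simp add: eventually_at_right_less)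
    show ?thesis using ev1 ev2
    proof eventually_elim
      case (elim \<sigma>)
      define L where "L = V * (2 * pi * \<sigma>\<^sup>2) powr (- real D / 2) * exp (- (dist q m + r)\<^sup>2 / (2 * \<sigma>\<^sup>2))"
      have L0: "L > 0" unfolding L_def using V elim by simp
      have PL: "L \<le> measure (gaussian_measure \<sigma> m) E"
        using low[OF elim(2) r(1,2)] unfolding L_def V_def by simp
      have "ln L \<le> ln (measure (gaussian_measure \<sigma> m) E)" using L0 PL by simp
      then have "f \<sigma> \<le> - \<sigma>\<^sup>2 * ln L" unfolding f_def by (simp add: mult_left_mono)
      also have "ln L = ln V + (- real D / 2) * ln (2 * pi * \<sigma>\<^sup>2) - (dist q m + r)\<^sup>2 / (2 * \<sigma>\<^sup>2)"
        unfolding L_def using V elim(2) by (simp add: ln_mult ln_powr)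
      also have "- \<sigma>\<^sup>2 * \<dots> = g \<sigma> + (dist q m + r)\<^sup>2 / 2"
        unfolding g_def using elim(2) by (simp add: field_simps)
      finally have "f \<sigma> \<le> g \<sigma> + (dist q m + r)\<^sup>2 / 2" .
      moreover have "(dist q m + r)\<^sup>2 / 2 \<le> (d + 2 * \<delta>)\<^sup>2 / 2"
        using q(2) r(3) r(1) by (simp add: dist_commute power_mono)
      ultimately show ?case using elim(1) dd e by linarith
    qed
  qed
  have "(f \<longlongrightarrow> d\<^sup>2 / 2) (at_right 0)"
  proof (rule tendstoI)
    fix e :: real assume e: "e > 0"
    have ev2: "\<forall>\<^sub>F \<sigma> in at_right 0. (0::real) < \<sigma>" by (simp add: eventually_at_right_less)
    show "\<forall>\<^sub>F \<sigma> in at_right 0. dist (f \<sigma>) (d\<^sup>2 / 2) < e"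
      using upper[OF e] ev2
    proof eventually_elim
      case (elim \<sigma>)
      then show ?case using lower[OF elim(2)] by (simp add: dist_real_def)
    qed
  qed
  then show ?thesis unfolding f_def d_def .
qed



lemma neg_mat_vec: "(- A) *v (x::real^'n) = - (A *v x)"
  by (simp add: vec_eq_iff matrix_vector_mult_def sum_negf)

lemma skew_inner:
  fixes A :: "real^'n^'n"
  assumes "transpose A = - A"
  shows "(A *v x) \<bullet> y = - (x \<bullet> (A *v y))"
proof -
  have "A *v x = x v* transpose A" by simp
  also have "\<dots> = x v* (- A)" using assms by simp
  finally have "(A *v x) \<bullet> y = x \<bullet> ((- A) *v y)" by (simp add: dot_lmul_matrix)
  then show ?thesis by (simp add: neg_mat_vec)
qed

lemma sq_vec:
  fixes A :: "real^'n^'n"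
  assumes "A ** A = - mat 1"
  shows "A *v (A *v x) = - x"
  by (simp add: matrix_vector_mul_assoc assms neg_mat_vec)

lemma R_vec:
  fixes A :: "real^'n^'n"
  shows "(cos a *\<^sub>R mat 1 + sin a *\<^sub>R A) *v x = cos a *\<^sub>R x + sin a *\<^sub>R (A *v x)"
  by (simp add: matrix_vector_mult_add_rdistrib scaleR_matrix_vector_assoc[symmetric])



theorem theorem5:
  fixes C :: nat and \<mu> :: "nat \<Rightarrow> real^'n" and \<alpha> :: real and A :: "real^'n^'n"
    and c :: nat
  assumes C2: "C \<ge> 2"
    and D_even: "even CARD('n)"
    and unit: "\<forall>j<C. norm (\<mu> j) = 1"
    and etf: "\<forall>j<C. \<forall>j'<C. j \<noteq> j' \<longrightarrow> \<mu> j \<bullet> \<mu> j' = - 1 / (real C - 1)"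
    and alpha: "0 \<le> \<alpha>" "\<alpha> \<le> pi / 2"
    and A_skew: "transpose A = - A"
    and A_sq: "A ** A = - mat 1"
    and c: "c < C"
  shows "\<exists>c'<C. c' \<noteq> c \<and>
           (\<exists>\<beta>. ((\<lambda>\<sigma>. - \<sigma>\<^sup>2 * ln (miscl_prob C \<mu>
                      (\<lambda>j. (cos \<alpha> *\<^sub>R mat 1 + sin \<alpha> *\<^sub>R A) *v \<mu> j) c c' \<sigma>))
                   \<longlongrightarrow> \<beta>) (at_right 0)
                \<and> \<beta> \<le> (1/4) * (cos \<alpha>)\<^sup>2 * (real C / (real C - 1)))"
proof -
  define w where "w = (\<lambda>j. (cos \<alpha> *\<^sub>R mat 1 + sin \<alpha> *\<^sub>R A) *v \<mu> j)"
  define c0 where "c0 = cos \<alpha>"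
  define s0 where "s0 = sin \<alpha>"
  define \<kappa> where "\<kappa> = 1 / (real C - 1)"
  have C1: "real C - 1 > 0" using C2 by simp
  have \<kappa>0: "\<kappa> > 0" unfolding \<kappa>_def using C1 by simp
  have c00: "c0 \<ge> 0" unfolding c0_def using alpha by (intro cos_ge_zero) auto
  have cs: "c0\<^sup>2 + s0\<^sup>2 = 1" unfolding c0_def s0_def by simp
  have G0: "\<mu> j \<bullet> \<mu> k = (if j = k then 1 else - \<kappa>)" if "j < C" "k < C" for j k
    using that unit etf unfolding \<kappa>_def by (auto simp: norm_eq_1)
  have wexp: "w j = c0 *\<^sub>R \<mu> j + s0 *\<^sub>R (A *v \<mu> j)" for j
    unfolding w_def c0_def s0_def by (rule R_vec)
  have winner: "w j \<bullet> y = c0 * (\<mu> j \<bullet> y) - s0 * (\<mu> j \<bullet> (A *v y))" for j y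
    unfolding wexp by (simp add: inner_add_left skew_inner[OF A_skew])
  have Aw: "A *v w k = c0 *\<^sub>R (A *v \<mu> k) - s0 *\<^sub>R \<mu> k" for k
    unfolding wexp by (simp add: matrix_vector_right_distrib sq_vec[OF A_sq] matrix_vector_mult_scaleR)
  have G: "w j \<bullet> w k = \<mu> j \<bullet> \<mu> k" for j k
  proof -
    have "w j \<bullet> w k = c0 * (\<mu> j \<bullet> w k) - s0 * (\<mu> j \<bullet> (A *v w k))" by (rule winner)
    also have "\<dots> = (c0\<^sup>2 + s0\<^sup>2) * (\<mu> j \<bullet> \<mu> k)"
      unfolding Aw by (simp add: wexp inner_add_right inner_diff_right power2_eq_square algebra_simps)
    finally show ?thesis using cs by simp
  qed
  have sum0: "(\<Sum>j<C. \<mu> j) = 0"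
  proof -
    have row: "(\<Sum>k<C. \<mu> j \<bullet> \<mu> k) = 0" if j: "j < C" for j
    proof -
      have "(\<Sum>k<C. \<mu> j \<bullet> \<mu> k) = \<mu> j \<bullet> \<mu> j + (\<Sum>k\<in>{..<C} - {j}. \<mu> j \<bullet> \<mu> k)"
        using j by (subst sum.remove[of _ j]) auto
      also have "(\<Sum>k\<in>{..<C} - {j}. \<mu> j \<bullet> \<mu> k) = (\<Sum>k\<in>{..<C} - {j}. - \<kappa>)"
        using j by (intro sum.cong) (auto simp: G0)
      also have "\<dots> = - (real C - 1) * \<kappa>" using j by (simp add: of_nat_diff algebra_simps)
      finally show ?thesis using j G0[OF j j] C1 unfolding \<kappa>_def by (simp add: field_simps)
    qed
    have "(\<Sum>j<C. \<mu> j) \<bullet> (\<Sum>j<C. \<mu> j) = (\<Sum>j<C. \<Sum>k<C. \<mu> j \<bullet> \<mu> k)"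
      by (simp add: inner_sum_left inner_sum_right) (rule sum.swap)
    also have "\<dots> = 0" using row by simp
    finally show ?thesis by simp
  qed
  define t where "t = (\<lambda>j. w j \<bullet> \<mu> c)"
  have tsum: "(\<Sum>j<C. t j) = 0"
    unfolding t_def winner sum_subtractf sum_distrib_left[symmetric] inner_sum_left[symmetric] sum0 by simp
  have tc: "t c = c0"
  proof -
    have "(A *v \<mu> c) \<bullet> \<mu> c = 0" using skew_inner[OF A_skew, of "\<mu> c" "\<mu> c"] by (simp add: inner_commute)
    then show ?thesis unfolding t_def winner using G0[OF c c] by (simp add: inner_commute)
  qed
  define S where "S = {j. j < C \<and> j \<noteq> c}"
  have Sfin: "finite S" unfolding S_def by simp
  have Sne: "S \<noteq> {}"
  proof (cases "c = 0")
    case True then have "1 \<in> S" using C2 unfolding S_def by simp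
    then show ?thesis by blast
  next
    case False then have "0 \<in> S" using C2 unfolding S_def by simp
    then show ?thesis by blast
  qed
  have cardS: "card S = C - 1"
  proof -
    have "S = {..<C} - {c}" unfolding S_def by auto
    then show ?thesis using c by simp
  qed
  define M where "M = Max (t ` S)"
  have "M \<in> t ` S" unfolding M_def using Sfin Sne by (intro Max_in) auto
  then obtain c' where c': "c' \<in> S" "t c' = M" by auto
  have Mge: "t j \<le> M" if "j \<in> S" for j unfolding M_def using Sfin that by simp
  have "(\<Sum>j<C. t j) = t c + (\<Sum>j\<in>S. t j)"
  proof -
    have "S = {..<C} - {c}" unfolding S_def by auto
    then show ?thesis using c by (simp add: sum.remove)
  qed
  then have sS: "(\<Sum>j\<in>S. t j) = - c0" using tsum tc by simp
  have "(\<Sum>j\<in>S. t j) \<le> of_nat (card S) * M" by (rule sum_bounded_above) (rule Mge)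
  then have "- c0 \<le> (real C - 1) * M" using sS cardS C2 by (simp add: of_nat_diff)
  then have Mlow: "- \<kappa> * c0 \<le> M" unfolding \<kappa>_def using C1 by (simp add: field_simps)
  define E where "E = pred_event C w c'"
  define q where "q = (\<lambda>\<epsilon>::real. \<mu> c + (c0 / 2) *\<^sub>R (w c' - w c) + \<epsilon> *\<^sub>R w c')"
  have c'C: "c' < C" "c' \<noteq> c" using c' unfolding S_def by auto
  have GW: "w j \<bullet> w k = (if j = k then 1 else - \<kappa>)" if "j < C" "k < C" for j k
    using G0[OF that] G by simp
  have qE: "q \<epsilon> \<in> E" if e: "\<epsilon> > 0" for \<epsilon>
    unfolding E_def pred_event_def
  proof (intro CollectI allI impI)
    fix j assume j: "j < C" "j \<noteq> c'"
    have wq: "w k \<bullet> q \<epsilon> = t k + (c0 / 2) * (w k \<bullet> w c' - w k \<bullet> w c) + \<epsilon> * (w k \<bullet> w c')" for k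
      unfolding q_def t_def by (simp add: inner_add_right inner_diff_right)
    have top: "w c' \<bullet> q \<epsilon> = M + (c0 / 2) * (1 + \<kappa>) + \<epsilon>"
      using wq[of c'] GW c'C c c' by simp
    show "w j \<bullet> q \<epsilon> < w c' \<bullet> q \<epsilon>"
    proof (cases "j = c")
      case True
      have "w j \<bullet> q \<epsilon> = c0 + (c0 / 2) * (- \<kappa> - 1) - \<epsilon> * \<kappa>"
        using wq[of j] GW c'C c True tc by simp
      then have "w j \<bullet> q \<epsilon> = c0 / 2 - (\<kappa> * c0) / 2 - \<epsilon> * \<kappa>" by (simp add: field_simps)
      moreover have "0 < \<epsilon> + \<epsilon> * \<kappa>" using e \<kappa>0 by (simp add: add_pos_pos)
      moreover have "M + (c0 / 2) * (1 + \<kappa>) + \<epsilon> = M + c0 / 2 + (\<kappa> * c0) / 2 + \<epsilon>" by (simp add: algebra_simps)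
      ultimately show ?thesis unfolding top using Mlow by linarith
    next
      case False
      then have "j \<in> S" using j unfolding S_def by simp
      then have tj: "t j \<le> M" by (rule Mge)
      have "w j \<bullet> q \<epsilon> = t j - \<epsilon> * \<kappa>"
        using wq[of j] GW c'C c False j by simp
      moreover have "0 \<le> (c0 / 2) * (1 + \<kappa>)" using c00 \<kappa>0 by simp
      moreover have "0 < \<epsilon> * \<kappa>" using e \<kappa>0 by simp
      ultimately show ?thesis unfolding top using tj e by linarith
    qed
  qed
  have Eopen: "open E" and Econv: "convex E"
  proof -
    have Eeq: "E = (\<Inter>j\<in>{j. j < C \<and> j \<noteq> c'}. {h. (w j - w c') \<bullet> h < 0})"
      unfolding E_def pred_event_def by (auto simp: inner_diff_left)
    show "open E" unfolding Eeq by (intro open_INT) (auto intro: open_halfspace_lt)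
    show "convex E" unfolding Eeq by (intro convex_INT convex_halfspace_lt)
  qed
  have Ene: "E \<noteq> {}" using qE[of 1] by auto
  have nw: "norm (w c' - w c) = sqrt (2 * (1 + \<kappa>))"
  proof -
    have "(norm (w c' - w c))\<^sup>2 = 2 * (1 + \<kappa>)"
      unfolding power2_norm_eq_inner using GW c'C c by (simp add: inner_diff_left inner_diff_right inner_commute)
    then show ?thesis by (metis norm_ge_zero real_sqrt_unique)
  qed
  have nwc: "norm (w c') = 1" using GW[of c' c'] c'C by (simp add: norm_eq_1)
  define D0 where "D0 = (c0 / 2) * sqrt (2 * (1 + \<kappa>))"
  have D00: "D0 \<ge> 0" unfolding D0_def using c00 \<kappa>0 by simp
  have inf_le: "infdist (\<mu> c) E \<le> D0"
  proof (rule field_le_epsilon)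
    fix e :: real assume e: "e > 0"
    have "infdist (\<mu> c) E \<le> dist (\<mu> c) (q e)" by (rule infdist_le[OF qE[OF e]])
    also have "dist (\<mu> c) (q e) = norm ((c0 / 2) *\<^sub>R (w c' - w c) + e *\<^sub>R w c')"
      unfolding q_def dist_norm by (simp add: algebra_simps norm_minus_commute)
    also have "\<dots> \<le> norm ((c0 / 2) *\<^sub>R (w c' - w c)) + norm (e *\<^sub>R w c')" by (rule norm_triangle_ineq)
    also have "\<dots> = D0 + e" unfolding D0_def using nw nwc c00 e by simp
    finally show "infdist (\<mu> c) E \<le> D0 + e" .
  qed
  have bound: "(infdist (\<mu> c) E)\<^sup>2 / 2 \<le> (1/4) * (cos \<alpha>)\<^sup>2 * (real C / (real C - 1))"
  proof -
    have "(infdist (\<mu> c) E)\<^sup>2 \<le> D0\<^sup>2" using inf_le infdist_nonneg by (intro power_mono) auto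
    also have "D0\<^sup>2 = (c0\<^sup>2 / 4) * (2 * (1 + \<kappa>))" unfolding D0_def using \<kappa>0 by (simp add: power_mult_distrib power_divide)
    also have "1 + \<kappa> = real C / (real C - 1)" unfolding \<kappa>_def using C1 by (simp add: field_simps)
    finally have h: "(infdist (\<mu> c) E)\<^sup>2 \<le> (c0\<^sup>2 / 4) * (2 * (real C / (real C - 1)))" .
    obtain rr where rr: "rr = real C / (real C - 1)" by simp
    have "(infdist (\<mu> c) E)\<^sup>2 / 2 \<le> (c0\<^sup>2 / 4) * (2 * rr) / 2"
      using divide_right_mono[OF h, of 2] unfolding rr by simp
    also have "(c0\<^sup>2 / 4) * (2 * rr) / 2 = (1/4) * c0\<^sup>2 * rr" by simp
    finally show ?thesis unfolding rr c0_def .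
  qed
  have lim: "((\<lambda>\<sigma>. - \<sigma>\<^sup>2 * ln (miscl_prob C \<mu> w c c' \<sigma>)) \<longlongrightarrow> (infdist (\<mu> c) E)\<^sup>2 / 2) (at_right 0)"
    unfolding miscl_prob_def E_def[symmetric] by (rule gauss_ldp[OF Eopen Econv Ene])
  show ?thesis
    using c'C lim bound unfolding w_def by blast
qed


end
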